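(* Assume the standing model below. Let $\mathbf{a}\in(0,\infty)^n$, let $\mathbf{x}=\mathbf{x}^*(\mathbf{a})=(\mathbf{s};\mathbf{r})$, and let $$v_i=a_i+\sum_j M^s_{ij}s_j+\sum_j M^d_{ij}r_j$$ be the total asset value of firm $i$. Suppose $v_i\neq d_i$ for all $i=1,\dots,n$, and define the solvency vector $\boldsymbol{\xi}\in\{0,1\}^n$ by $\xi_i=1$ if $v_i>d_i$ and $\xi_i=0$ otherwise. Then: 1. The matrix $$\mathbf{I}_{2n}-\operatorname{diag}\big((\boldsymbol{\xi};\mathbf{1}-\boldsymbol{\xi})\big)\begin{pmatrix}\mathbf{M}^s&\mathbf{M}^d\\ \mathbf{M}^s&\mathbf{M}^d\end{pmatrix}$$ is invertible. 2. $\mathbf{x}^*$ is differentiable at $\mathbf{a}$, with $2n\times n$ Jacobian $$\frac{\partial \mathbf{x}^*}{\partial \mathbf{a}}(\mathbf{a})=\left[\mathbf{I}_{2n}-\operatorname{diag}\big((\boldsymbol{\xi};\mathbf{1}-\boldsymbol{\xi})\big)\begin{pmatrix}\mathbf{M}^s&\mathbf{M}^d\\ \mathbf{M}^s&\mathbf{M}^d\end{pmatrix}\right]^{-1}\begin{pmatrix}\operatorname{diag}(\boldsymbol{\xi})\\ \operatorname{diag}(\mathbf{1}-\boldsymbol{\xi})\end{pmatrix}.$$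
   Context: Standing model (network valuation with cross-holdings). There are $n$ firms. Cross-holding matrices. $\mathbf{M}^s,\mathbf{M}^d\in\mathbb{R}^{n\times n}$ are matrices of equity and debt cross-holding fractions: firm $i$ holds fraction $M^s_{ij}$ of firm $j$'s equity and fraction $M^d_{ij}$ of firm $j$'s debt. They satisfy: - $M^s_{ii}=M^d_{ii}=0$ for all $i$; - $M^s_{ij},M^d_{ij}\ge 0$ for all $i,j$; - $\sum_i M^s_{ij}<1$ and $\sum_i M^d_{ij}<1$ for every $j$. Asset and debt data. Firm $i$ has external asset value $a_i>0$ and nominal debt $d_i>0$ (fixed). Fixed-point map. For $\mathbf{x}=(\mathbf{s};\mathbf{r})\in\mathbb{R}^{2n}$ (equity values $\mathbf{s}$ stacked over debt recovery values $\mathbf{r}$), define $\mathbf{g}=(g^s_1,\dots,g^s_n,g^r_1,\dots,g^r_n)$ by $$g^s_i(\mathbf{a},\mathbf{x})=\max\Big\{0,\;a_i+\sum_j M^s_{ij}s_j+\sum_j M^d_{ij}r_j-d_i\Big\},$$ $$g^r_i(\mathbf{a},\mathbf{x})=\min\Big\{d_i,\;a_i+\sum_j M^s_{ij}s_j+\sum_j M^d_{ij}r_j\Big\}.$$ For every $\mathbf{a}\in(0,\infty)^n$ the equation $\mathbf{x}=\mathbf{g}(\mathbf{a},\mathbf{x})$ has a unique (nonnegative) solution, denoted $\mathbf{x}^*(\mathbf{a})=(\mathbf{s}^*(\mathbf{a});\mathbf{r}^*(\mathbf{a}))$. Notation. $(\mathbf{u};\mathbf{w})$ denotes row-wise stacking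 of vectors, and $\operatorname{diag}(\mathbf{u})$ denotes the diagonal matrix with diagonal $\mathbf{u}$. *)

theory Defs
  imports "HOL-Analysis.Analysis"
begin

text \<open>Firms are indexed by a finite type 'n (so n = CARD('n)). Vectors in R^(2n) are indexed
by the sum type 'n + 'n: index Inl i is the equity coordinate s_i, index Inr i the debt
recovery coordinate r_i.\<close>

definition stack :: "real^'n \<Rightarrow> real^'n \<Rightarrow> real^('n + 'n)" where
  "stack s r = (\<chi> k. case k of Inl i \<Rightarrow> s $ i | Inr i \<Rightarrow> r $ i)"

definition upper :: "real^('n + 'n) \<Rightarrow> real^'n" where
  "upper x = (\<chi> i. x $ Inl i)"

definition lower :: "real^('n + 'n) \<Rightarrow> real^'n" where
  "lower x = (\<chi> i. x $ Inr i)"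

definition totval :: "real^'n^'n \<Rightarrow> real^'n^'n \<Rightarrow> real^'n \<Rightarrow> real^('n + 'n) \<Rightarrow> real^'n" where
  "totval Ms Md a x = a + Ms *v upper x + Md *v lower x"

definition gmap :: "real^'n^'n \<Rightarrow> real^'n^'n \<Rightarrow> real^'n \<Rightarrow> real^'n \<Rightarrow> real^('n + 'n) \<Rightarrow> real^('n + 'n)" where
  "gmap Ms Md d a x =
     stack (\<chi> i. max 0 (totval Ms Md a x $ i - d $ i))
           (\<chi> i. min (d $ i) (totval Ms Md a x $ i))"

definition xstar :: "real^'n^'n \<Rightarrow> real^'n^'n \<Rightarrow> real^'n \<Rightarrow> real^'n \<Rightarrow> real^('n + 'n)" where
  "xstar Ms Md d a = (THE x. x = gmap Ms Md d a x)"

definition diagv :: "real^'n \<Rightarrow> real^'n^'n" where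
  "diagv u = (\<chi> i j. if i = j then u $ i else 0)"

definition blockM :: "real^'n^'n \<Rightarrow> real^'n^'n \<Rightarrow> real^('n + 'n)^('n + 'n)" where
  "blockM Ms Md = (\<chi> k l.
     (let i = (case k of Inl i \<Rightarrow> i | Inr i \<Rightarrow> i) in
      case l of Inl j \<Rightarrow> Ms $ i $ j | Inr j \<Rightarrow> Md $ i $ j))"

definition stackM :: "real^'n^'n \<Rightarrow> real^'n^'n \<Rightarrow> real^'n^('n + 'n)" where
  "stackM A B = (\<chi> k. case k of Inl i \<Rightarrow> A $ i | Inr i \<Rightarrow> B $ i)"

definition solvency :: "real^'n \<Rightarrow> real^'n \<Rightarrow> real^'n" where
  "solvency v d = (\<chi> i. if v $ i > d $ i then 1 else 0)"

end

theory Submission imports Defs begin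

definition N1 :: "real^'m \<Rightarrow> real" where "N1 x = (\<Sum>k\<in>UNIV. \<bar>x$k\<bar>)"

lemma sum_Plus_UNIV: "(\<Sum>k\<in>(UNIV::('a::finite+'b::finite) set). f k) = (\<Sum>i\<in>UNIV. f (Inl i)) + (\<Sum>i\<in>UNIV. f (Inr i))"
  using sum.Plus[of "UNIV::'a set" "UNIV::'b set" f] by (simp add: comp_def)

lemma N1_Plus: "N1 (x::real^('a::finite+'b::finite)) = (\<Sum>i\<in>UNIV. \<bar>x$Inl i\<bar>) + (\<Sum>i\<in>UNIV. \<bar>x$Inr i\<bar>)"
  unfolding N1_def by (rule sum_Plus_UNIV)

lemma gmap_Inl[simp]: "gmap Ms Md d a x $ Inl i = max 0 (totval Ms Md a x $ i - d $ i)"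
  by (simp add: gmap_def stack_def)
lemma gmap_Inr[simp]: "gmap Ms Md d a x $ Inr i = min (d $ i) (totval Ms Md a x $ i)"
  by (simp add: gmap_def stack_def)

lemma totval_comp: "totval Ms Md a x $ i = a$i + (\<Sum>j\<in>UNIV. Ms$i$j * x$Inl j) + (\<Sum>j\<in>UNIV. Md$i$j * x$Inr j)"
  by (simp add: totval_def matrix_vector_mult_def upper_def lower_def)

definition colbound :: "real^'n^'n \<Rightarrow> real^'n^'n \<Rightarrow> real \<Rightarrow> bool" where
  "colbound Ms Md c \<longleftrightarrow> 0 \<le> c \<and> c < 1 \<and> (\<forall>i j. 0 \<le> Ms$i$j \<and> 0 \<le> Md$i$j)
     \<and> (\<forall>j. (\<Sum>i\<in>UNIV. Ms$i$j) \<le> c \<and> (\<Sum>i\<in>UNIV. Md$i$j) \<le> c)"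

lemma colbound_ex:
  fixes Ms Md :: "real^'n^'n"
  assumes "\<forall>i j. Ms $ i $ j \<ge> 0" "\<forall>i j. Md $ i $ j \<ge> 0"
    "\<forall>j. (\<Sum>i\<in>UNIV. Ms $ i $ j) < 1" "\<forall>j. (\<Sum>i\<in>UNIV. Md $ i $ j) < 1"
  shows "\<exists>c. colbound Ms Md c"
proof -
  define S where "S = {0} \<union> range (\<lambda>j. \<Sum>i\<in>UNIV. Ms $ i $ j) \<union> range (\<lambda>j. \<Sum>i\<in>UNIV. Md $ i $ j)"
  have fin: "finite S" "S \<noteq> {}" unfolding S_def by auto
  have "Max S < 1" using fin assms(3,4) by (subst Max_less_iff) (auto simp: S_def)
  moreover have "0 \<le> Max S" using fin by (intro Max_ge) (auto simp: S_def)
  moreover have "\<forall>j. (\<Sum>i\<in>UNIV. Ms$i$j) \<le> Max S \<and> (\<Sum>i\<in>UNIV. Md$i$j) \<le> Max S"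
  proof
    fix j
    have "(\<Sum>i\<in>UNIV. Ms$i$j) \<in> S" "(\<Sum>i\<in>UNIV. Md$i$j) \<in> S" unfolding S_def by auto
    then show "(\<Sum>i\<in>UNIV. Ms$i$j) \<le> Max S \<and> (\<Sum>i\<in>UNIV. Md$i$j) \<le> Max S"
      using fin(1) Max_ge by blast
  qed
  ultimately show ?thesis using assms unfolding colbound_def by blast
qed

lemma v_est:
  assumes cb: "colbound Ms Md c"
  shows "(\<Sum>i\<in>UNIV. \<bar>totval Ms Md a x $ i - totval Ms Md b y $ i\<bar>) \<le> N1 (a - b) + c * N1 (x - y)"
proof -
  have nn: "\<And>i j. 0 \<le> Ms$i$j" "\<And>i j. 0 \<le> Md$i$j" using cb by (auto simp: colbound_def)
  have h1: "\<bar>totval Ms Md a x $ i - totval Ms Md b y $ i\<bar> \<le> \<bar>a$i - b$i\<bar> + (\<Sum>j\<in>UNIV. Ms$i$j * \<bar>x$Inl j - y$Inl j\<bar>) + (\<Sum>j\<in>UNIV. Md$i$j * \<bar>x$Inr j - y$Inr j\<bar>)" for i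
  proof -
    have e: "totval Ms Md a x $ i - totval Ms Md b y $ i = (a$i - b$i) + (\<Sum>j\<in>UNIV. Ms$i$j * (x$Inl j - y$Inl j)) + (\<Sum>j\<in>UNIV. Md$i$j * (x$Inr j - y$Inr j))"
      by (simp add: totval_comp sum_subtractf right_diff_distrib)
    have "\<bar>\<Sum>j\<in>UNIV. Ms$i$j * (x$Inl j - y$Inl j)\<bar> \<le> (\<Sum>j\<in>UNIV. Ms$i$j * \<bar>x$Inl j - y$Inl j\<bar>)"
      by (rule order_trans[OF sum_abs]) (simp add: abs_mult nn)
    moreover have "\<bar>\<Sum>j\<in>UNIV. Md$i$j * (x$Inr j - y$Inr j)\<bar> \<le> (\<Sum>j\<in>UNIV. Md$i$j * \<bar>x$Inr j - y$Inr j\<bar>)"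
      by (rule order_trans[OF sum_abs]) (simp add: abs_mult nn)
    ultimately show ?thesis unfolding e by linarith
  qed
  have "(\<Sum>i\<in>UNIV. \<bar>totval Ms Md a x $ i - totval Ms Md b y $ i\<bar>) \<le>
     (\<Sum>i\<in>UNIV. \<bar>a$i - b$i\<bar> + (\<Sum>j\<in>UNIV. Ms$i$j * \<bar>x$Inl j - y$Inl j\<bar>) + (\<Sum>j\<in>UNIV. Md$i$j * \<bar>x$Inr j - y$Inr j\<bar>))"
    by (rule sum_mono) (rule h1)
  also have "\<dots> = N1 (a - b) + (\<Sum>j\<in>UNIV. (\<Sum>i\<in>UNIV. Ms$i$j) * \<bar>x$Inl j - y$Inl j\<bar>) + (\<Sum>j\<in>UNIV. (\<Sum>i\<in>UNIV. Md$i$j) * \<bar>x$Inr j - y$Inr j\<bar>)"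
  proof -
    have s1: "(\<Sum>i\<in>UNIV. \<Sum>j\<in>UNIV. Ms$i$j * \<bar>x$Inl j - y$Inl j\<bar>) = (\<Sum>j\<in>UNIV. (\<Sum>i\<in>UNIV. Ms$i$j) * \<bar>x$Inl j - y$Inl j\<bar>)"
      by (subst sum.swap) (simp add: sum_distrib_right)
    have s2: "(\<Sum>i\<in>UNIV. \<Sum>j\<in>UNIV. Md$i$j * \<bar>x$Inr j - y$Inr j\<bar>) = (\<Sum>j\<in>UNIV. (\<Sum>i\<in>UNIV. Md$i$j) * \<bar>x$Inr j - y$Inr j\<bar>)"
      by (subst sum.swap) (simp add: sum_distrib_right)
    show ?thesis by (simp only: sum.distrib s1 s2 N1_def vector_minus_component)
  qed
  also have "\<dots> \<le> N1 (a - b) + (\<Sum>j\<in>UNIV. c * \<bar>x$Inl j - y$Inl j\<bar>) + (\<Sum>j\<in>UNIV. c * \<bar>x$Inr j - y$Inr j\<bar>)"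
    using cb unfolding colbound_def by (intro add_mono sum_mono mult_right_mono) auto
  also have "\<dots> = N1 (a - b) + c * N1 (x - y)"
    by (simp add: N1_Plus sum_distrib_left distrib_left)
  finally show ?thesis .
qed

lemma g_est:
  "N1 (gmap Ms Md d a x - gmap Ms Md d b y) = (\<Sum>i\<in>UNIV. \<bar>totval Ms Md a x $ i - totval Ms Md b y $ i\<bar>)"
proof -
  have "\<And>u v (e::real). \<bar>max 0 (u - e) - max 0 (v - e)\<bar> + \<bar>min e u - min e v\<bar> = \<bar>u - v\<bar>"
    by (auto simp: max_def min_def abs_if)
  then show ?thesis by (simp add: N1_Plus sum.distrib[symmetric])
qed



lemma N1_nonneg: "0 \<le> N1 x" unfolding N1_def by (simp add: sum_nonneg)
lemma norm_le_N1: "norm x \<le> N1 x" unfolding N1_def by (rule norm_le_l1_cart)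
lemma N1_le_norm: "N1 (x::real^'m) \<le> real CARD('m) * norm x"
proof -
  have "N1 x \<le> (\<Sum>k\<in>(UNIV::'m set). norm x)" unfolding N1_def by (intro sum_mono component_le_norm_cart)
  then show ?thesis by simp
qed
lemma N1_zero: assumes "N1 (x::real^'m) \<le> 0" shows "x = 0"
proof -
  have "norm x \<le> 0" using norm_le_N1[of x] assms by linarith
  then show ?thesis by simp
qed
lemma N1_commute: "N1 (x - y) = N1 (y - x)"
  unfolding N1_def by (rule sum.cong) (auto simp: abs_minus_commute[of "x$k" "y$k" for k])

lemma contr:
  assumes "colbound Ms Md c"
  shows "N1 (gmap Ms Md d b x - gmap Ms Md d b y) \<le> c * N1 (x - y)"
proof -
  have "N1 (b - b) = 0" by (simp add: N1_def)
  then show ?thesis using v_est[OF assms, of b x b y] g_est[of Ms Md d b x b y] by linarith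
qed

lemma fp_unique:
  assumes cb: "colbound Ms Md c" and "x = gmap Ms Md d b x" "y = gmap Ms Md d b y"
  shows "x = y"
proof -
  have "N1 (x - y) \<le> c * N1 (x - y)" using contr[OF cb, of d b x y] by (simp only: assms(2,3)[symmetric])
  moreover have "c < 1" using cb by (simp add: colbound_def)
  ultimately have "N1 (x - y) \<le> 0"
  proof -
    assume a1: "N1 (x - y) \<le> c * N1 (x - y)" and a2: "c < 1"
    show ?thesis
    proof (rule ccontr)
      assume "\<not> N1 (x - y) \<le> 0"
      then have "N1 (x - y) > 0" by simp
      from mult_strict_right_mono[OF a2 this] have "c * N1 (x - y) < N1 (x - y)" by simp
      then show False using a1 by simp
    qed
  qed
  then have "x - y = 0" by (rule N1_zero)
  then show ?thesis by simp
qed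

lemma fp_exists:
  assumes cb: "colbound Ms Md c"
  shows "\<exists>x. x = gmap Ms Md d b x"
proof -
  define G where "G = gmap Ms Md d b"
  define it where "it m = (G ^^ m) 0" for m
  have itS: "it (Suc m) = G (it m)" for m by (simp add: it_def)
  have c0: "0 \<le> c" "c < 1" using cb by (auto simp: colbound_def)
  define K where "K = N1 (it 1 - it 0)"
  have step: "N1 (it (Suc m) - it m) \<le> c ^ m * K" for m
  proof (induction m)
    case 0 then show ?case by (simp add: K_def)
  next
    case (Suc m)
    have "N1 (it (Suc (Suc m)) - it (Suc m)) \<le> c * N1 (it (Suc m) - it m)"
      unfolding itS[of "Suc m"] itS[of m] G_def by (rule contr[OF cb])
    also have "\<dots> \<le> c * (c ^ m * K)" using Suc c0 by (intro mult_left_mono) auto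
    finally show ?case by simp
  qed
  have "summable (\<lambda>m. K * c ^ m)" using c0 by (intro summable_mult summable_geometric) simp
  then have "summable (\<lambda>m. norm (it (Suc m) - it m))"
  proof (rule summable_comparison_test')
    fix m :: nat
    have "norm (norm (it (Suc m) - it m)) = norm (it (Suc m) - it m)" by simp
    also have "\<dots> \<le> N1 (it (Suc m) - it m)" by (rule norm_le_N1)
    also have "\<dots> \<le> K * c ^ m" using step[of m] by (simp add: mult.commute)
    finally show "norm (norm (it (Suc m) - it m)) \<le> K * c ^ m" .
  qed
  then have "summable (\<lambda>m. it (Suc m) - it m)" by (rule summable_norm_cancel)
  from summable_LIMSEQ[OF this] have "(\<lambda>n. it n - it 0) \<longlonglongrightarrow> (\<Sum>m. it (Suc m) - it m)"
    by (simp add: sum_lessThan_telescope)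
  then have "(\<lambda>n. (it n - it 0) + it 0) \<longlonglongrightarrow> (\<Sum>m. it (Suc m) - it m) + it 0"
    by (intro tendsto_add) auto
  then have "it \<longlonglongrightarrow> (\<Sum>m. it (Suc m) - it m) + it 0" by simp
  then obtain L where L: "it \<longlonglongrightarrow> L" by blast
  have "(\<lambda>m. G (it m) - G L) \<longlonglongrightarrow> 0"
  proof (rule Lim_null_comparison)
    show "\<forall>\<^sub>F m in sequentially. norm (G (it m) - G L) \<le> c * real CARD('a + 'a) * norm (it m - L)"
    proof (rule always_eventually, rule allI)
      fix m
      have "norm (G (it m) - G L) \<le> N1 (G (it m) - G L)" by (rule norm_le_N1)
      also have "\<dots> \<le> c * N1 (it m - L)" unfolding G_def by (rule contr[OF cb])
      also have "\<dots> \<le> c * (real CARD('a + 'a) * norm (it m - L))"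
        using c0 by (intro mult_left_mono N1_le_norm) auto
      finally show "norm (G (it m) - G L) \<le> c * real CARD('a + 'a) * norm (it m - L)" by simp
    qed
    have "(\<lambda>m. norm (it m - L)) \<longlonglongrightarrow> 0" using LIM_zero[OF L] by (rule tendsto_norm_zero)
    then show "(\<lambda>m. c * real CARD('a + 'a) * norm (it m - L)) \<longlonglongrightarrow> 0"
      using tendsto_mult_left[of _ 0 _ "c * real CARD('a + 'a)"] by simp
  qed
  then have "(\<lambda>m. G (it m)) \<longlonglongrightarrow> G L" by (simp add: LIM_zero_iff)
  moreover have "(\<lambda>m. G (it m)) \<longlonglongrightarrow> L" using LIMSEQ_Suc[OF L] by (simp add: itS)
  ultimately have "L = G L" using LIMSEQ_unique by blast
  then show ?thesis unfolding G_def by blast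
qed

lemma xstar_fp:
  assumes cb: "colbound Ms Md c"
  shows "xstar Ms Md d b = gmap Ms Md d b (xstar Ms Md d b)"
proof -
  have "\<exists>!x. x = gmap Ms Md d b x" using fp_exists[OF cb] fp_unique[OF cb] by blast
  then show ?thesis unfolding xstar_def by (rule theI')
qed



lemma N1_contr_zero:
  assumes a1: "N1 x \<le> c * N1 x" and a2: "c < 1" shows "x = 0"
proof -
  have "N1 x \<le> 0"
  proof (rule ccontr)
    assume "\<not> N1 x \<le> 0"
    then have "N1 x > 0" by simp
    from mult_strict_right_mono[OF a2 this] have "c * N1 x < N1 x" by simp
    then show False using a1 by simp
  qed
  then show ?thesis by (rule N1_zero)
qed

definition W :: "real^'n^'n \<Rightarrow> real^'n^'n \<Rightarrow> real^('n + 'n) \<Rightarrow> real^'n" where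
  "W Ms Md x = Ms *v upper x + Md *v lower x"

lemma totval_W: "totval Ms Md a x = a + W Ms Md x" by (simp add: totval_def W_def)

lemma diagv_mult[simp]: "(diagv u *v y) $ k = u$k * y$k"
proof -
  have "(diagv u *v y) $ k = (\<Sum>j\<in>UNIV. (if k = j then u$k else 0) * y$j)"
    by (simp add: diagv_def matrix_vector_mult_def)
  also have "\<dots> = (\<Sum>j\<in>UNIV. if j = k then u$k * y$k else 0)" by (rule sum.cong) auto
  finally show ?thesis by simp
qed

lemma blockM_Inl[simp]: "(blockM Ms Md *v x) $ Inl i = W Ms Md x $ i"
  by (simp add: blockM_def matrix_vector_mult_def sum_Plus_UNIV W_def upper_def lower_def)
lemma blockM_Inr[simp]: "(blockM Ms Md *v x) $ Inr i = W Ms Md x $ i"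
  by (simp add: blockM_def matrix_vector_mult_def sum_Plus_UNIV W_def upper_def lower_def)
lemma stackM_Inl[simp]: "(stackM P Q *v b) $ Inl i = (P *v b) $ i"
  by (simp add: stackM_def matrix_vector_mult_def)
lemma stackM_Inr[simp]: "(stackM P Q *v b) $ Inr i = (Q *v b) $ i"
  by (simp add: stackM_def matrix_vector_mult_def)
lemma stack_Inl[simp]: "stack u w $ Inl i = u $ i" by (simp add: stack_def)
lemma stack_Inr[simp]: "stack u w $ Inr i = w $ i" by (simp add: stack_def)

lemma Amult: "((mat 1 - diagv u ** blockM Ms Md) *v x) $ k = x $ k - u $ k * (blockM Ms Md *v x) $ k"
  by (simp add: matrix_vector_mult_diff_rdistrib matrix_vector_mul_assoc[symmetric])

lemma W_est:
  assumes cb: "colbound Ms Md c"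
  shows "(\<Sum>i\<in>UNIV. \<bar>W Ms Md x $ i\<bar>) \<le> c * N1 x"
proof -
  have u: "upper 0 = 0" "lower 0 = 0" by (simp_all add: upper_def lower_def vec_eq_iff)
  have "W Ms Md 0 = 0" by (simp add: W_def u)
  then show ?thesis using v_est[OF cb, of 0 x 0 0] by (simp add: totval_W N1_def)
qed

definition zo :: "real^'n \<Rightarrow> bool" where "zo u \<longleftrightarrow> (\<forall>i. u$i = 0 \<or> u$i = 1)"

lemma A_inv:
  assumes cb: "colbound Ms Md c" and z: "zo \<xi>"
  shows "invertible (mat 1 - diagv (stack \<xi> (1 - \<xi>)) ** blockM Ms Md)"
proof -
  let ?A = "mat 1 - diagv (stack \<xi> (1 - \<xi>)) ** blockM Ms Md"
  have ker: "x = 0" if "?A *v x = 0" for x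
  proof -
    have e: "(?A *v x) $ k = 0" for k using that by simp
    have l: "x $ Inl i = \<xi>$i * W Ms Md x $ i" for i using e[of "Inl i"] by (simp add: Amult)
    have r: "x $ Inr i = (1 - \<xi>$i) * W Ms Md x $ i" for i using e[of "Inr i"] by (simp add: Amult)
    have "\<bar>\<xi>$i * W Ms Md x $ i\<bar> + \<bar>(1 - \<xi>$i) * W Ms Md x $ i\<bar> = \<bar>W Ms Md x $ i\<bar>" for i
      using z unfolding zo_def by (cases "\<xi>$i = 0") auto
    then have "N1 x = (\<Sum>i\<in>UNIV. \<bar>W Ms Md x $ i\<bar>)"
      by (simp add: N1_Plus l r sum.distrib[symmetric])
    then have "N1 x \<le> c * N1 x" using W_est[OF cb, of x] by simp
    then show "x = 0" using cb N1_contr_zero unfolding colbound_def by blast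
  qed
  have "inj ((*v) ?A)"
  proof (rule injI)
    fix x y assume "?A *v x = ?A *v y"
    then have "?A *v (x - y) = 0" by (simp add: matrix_vector_mult_diff_distrib)
    then show "x = y" using ker by fastforce
  qed
  then have "\<exists>B. B ** ?A = mat 1" using matrix_left_invertible_injective by blast
  then show ?thesis using invertible_left_inverse by blast
qed

lemma affine_eq:
  fixes Ms Md :: "real^'n^'n"
  assumes fp: "x = gmap Ms Md d b x"
    and side: "\<forall>i. (\<xi>$i = 1 \<and> d$i \<le> totval Ms Md b x $ i) \<or> (\<xi>$i = 0 \<and> totval Ms Md b x $ i \<le> d$i)"
  shows "(mat 1 - diagv (stack \<xi> (1 - \<xi>)) ** blockM Ms Md) *v x
         = stackM (diagv \<xi>) (diagv (1 - \<xi>)) *v b + stack (\<chi> i. - (\<xi>$i * d$i)) (\<chi> i. \<xi>$i * d$i)"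
proof -
  have l: "x $ Inl i = max 0 (b$i + W Ms Md x $ i - d$i)" for i
    using arg_cong[OF fp, of "\<lambda>y. y $ Inl i"] by (simp add: totval_W)
  have r: "x $ Inr i = min (d$i) (b$i + W Ms Md x $ i)" for i
    using arg_cong[OF fp, of "\<lambda>y. y $ Inr i"] by (simp add: totval_W)
  show ?thesis
  proof (subst vec_eq_iff, rule allI)
    fix k :: "'n + 'n"
    show "((mat 1 - diagv (stack \<xi> (1 - \<xi>)) ** blockM Ms Md) *v x) $ k =
      (stackM (diagv \<xi>) (diagv (1 - \<xi>)) *v b + stack (\<chi> i. - (\<xi>$i * d$i)) (\<chi> i. \<xi>$i * d$i)) $ k"
    proof (cases k)
      case (Inl i)
      have "(\<xi>$i = 1 \<and> d$i \<le> b$i + W Ms Md x $ i) \<or> (\<xi>$i = 0 \<and> b$i + W Ms Md x $ i \<le> d$i)"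
        using side by (simp add: totval_W)
      then show ?thesis unfolding Inl by (auto simp: Amult l max_def)
    next
      case (Inr i)
      have "(\<xi>$i = 1 \<and> d$i \<le> b$i + W Ms Md x $ i) \<or> (\<xi>$i = 0 \<and> b$i + W Ms Md x $ i \<le> d$i)"
        using side by (simp add: totval_W)
      then show ?thesis unfolding Inr by (auto simp: Amult r min_def)
    qed
  qed
qed



lemma matrix_inv_left':
  assumes "invertible (A::real^'m^'m)" shows "matrix_inv A ** A = mat 1"
proof -
  from assms obtain A' where "A ** A' = mat 1 \<and> A' ** A = mat 1" unfolding invertible_def by blast
  then have "A ** (SOME A'. A ** A' = mat 1 \<and> A' ** A = mat 1) = mat 1 \<and> (SOME A'. A ** A' = mat 1 \<and> A' ** A = mat 1) ** A = mat 1"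
    by (rule someI)
  then show ?thesis unfolding matrix_inv_def by blast
qed

theorem mainTheorem2:
  fixes Ms Md :: "real^'n^'n" and a d :: "real^'n"
  assumes diag_s: "\<forall>i. Ms $ i $ i = 0" and diag_d: "\<forall>i. Md $ i $ i = 0"
    and nonneg_s: "\<forall>i j. Ms $ i $ j \<ge> 0" and nonneg_d: "\<forall>i j. Md $ i $ j \<ge> 0"
    and col_s: "\<forall>j. (\<Sum>i\<in>UNIV. Ms $ i $ j) < 1" and col_d: "\<forall>j. (\<Sum>i\<in>UNIV. Md $ i $ j) < 1"
    and d_pos: "\<forall>i. d $ i > 0"
    and a_pos: "\<forall>i. a $ i > 0"
    and v_ne: "\<forall>i. totval Ms Md a (xstar Ms Md d a) $ i \<noteq> d $ i"
  shows "let \<xi> = solvency (totval Ms Md a (xstar Ms Md d a)) d;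
             A = mat 1 - diagv (stack \<xi> (1 - \<xi>)) ** blockM Ms Md;
             J = matrix_inv A ** stackM (diagv \<xi>) (diagv (1 - \<xi>))
         in invertible A \<and>
            (xstar Ms Md d has_derivative (\<lambda>h. J *v h)) (at a within {b. \<forall>i. 0 < b $ i})"
proof -
  obtain c where cb: "colbound Ms Md c" using colbound_ex[OF nonneg_s nonneg_d col_s col_d] by blast
  have c0: "0 \<le> c" "c < 1" using cb by (auto simp: colbound_def)
  define X where "X = xstar Ms Md d"
  define va where "va = totval Ms Md a (X a)"
  define \<xi> where "\<xi> = solvency va d"
  define A where "A = mat 1 - diagv (stack \<xi> (1 - \<xi>)) ** blockM Ms Md"
  define E where "E = stackM (diagv \<xi>) (diagv (1 - \<xi>))"
  define J where "J = matrix_inv A ** E"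
  define kk where "kk = stack (\<chi> i. - (\<xi>$i * d$i)) (\<chi> i. \<xi>$i * d$i)"
  have z: "zo \<xi>" by (simp add: zo_def \<xi>_def solvency_def)
  have inv: "invertible A" unfolding A_def by (rule A_inv[OF cb z])
  have fpX: "X b = gmap Ms Md d b (X b)" for b unfolding X_def by (rule xstar_fp[OF cb])
  have vne: "va $ i \<noteq> d $ i" for i using v_ne by (simp add: va_def X_def)
  define \<delta> where "\<delta> = Min (range (\<lambda>i. \<bar>va$i - d$i\<bar>))"
  have \<delta>pos: "\<delta> > 0" unfolding \<delta>_def using vne by (subst Min_gr_iff) auto
  have \<delta>le: "\<delta> \<le> \<bar>va$i - d$i\<bar>" for i unfolding \<delta>_def by (rule Min_le) auto
  define r where "r = \<delta> * (1 - c) / (real CARD('n) + 1)"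
  have rpos: "r > 0" unfolding r_def using \<delta>pos c0 by (intro divide_pos_pos mult_pos_pos) auto
  have side_b: "\<forall>i. (\<xi>$i = 1 \<and> d$i \<le> totval Ms Md b (X b) $ i) \<or> (\<xi>$i = 0 \<and> totval Ms Md b (X b) $ i \<le> d$i)"
    if db: "dist b a < r" for b
  proof -
    define vb where "vb = totval Ms Md b (X b)"
    define V where "V = (\<Sum>i\<in>UNIV. \<bar>vb $ i - va $ i\<bar>)"
    have "N1 (gmap Ms Md d b (X b) - gmap Ms Md d a (X a)) = V"
      unfolding V_def vb_def va_def by (rule g_est)
    then have NX: "N1 (X b - X a) = V" using fpX[of a] fpX[of b] by metis
    have "V \<le> N1 (b - a) + c * N1 (X b - X a)" unfolding V_def vb_def va_def by (rule v_est[OF cb])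
    then have "(1 - c) * V \<le> N1 (b - a)" using NX by (simp add: algebra_simps)
    also have "\<dots> \<le> real CARD('n) * norm (b - a)" by (rule N1_le_norm)
    also have "\<dots> \<le> real CARD('n) * r" using db by (intro mult_left_mono) (auto simp: dist_norm)
    also have "\<dots> < \<delta> * (1 - c)"
    proof -
      have "real CARD('n) * r = \<delta> * (1 - c) * (real CARD('n) / (real CARD('n) + 1))"
        by (simp add: r_def)
      also have "\<dots> < \<delta> * (1 - c) * 1" using \<delta>pos c0 by (intro mult_strict_left_mono) auto
      finally show ?thesis by simp
    qed
    finally have "V < \<delta>" using c0 by (simp add: mult.commute)
    then have close: "\<bar>vb $ i - va $ i\<bar> < \<delta>" for i
      using member_le_sum[of i UNIV "\<lambda>i. \<bar>vb $ i - va $ i\<bar>"] unfolding V_def by simp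
    show  "\<forall>i. (\<xi>$i = 1 \<and> d$i \<le> totval Ms Md b (X b) $ i) \<or> (\<xi>$i = 0 \<and> totval Ms Md b (X b) $ i \<le> d$i)"
    proof
      fix i
      have "\<bar>vb $ i - va $ i\<bar> < \<bar>va$i - d$i\<bar>" using close[of i] \<delta>le[of i] by linarith
      then show "(\<xi>$i = 1 \<and> d$i \<le> totval Ms Md b (X b) $ i) \<or> (\<xi>$i = 0 \<and> totval Ms Md b (X b) $ i \<le> d$i)"
        using vne[of i] unfolding \<xi>_def solvency_def vb_def[symmetric] by (cases "va $ i > d $ i") auto
    qed
  qed
  have eq: "A *v X b = E *v b + kk" if "dist b a < r" for b
    unfolding A_def E_def kk_def by (rule affine_eq[OF fpX side_b[OF that]])
  have near: "X b = X a + J *v (b - a)" if db: "dist b a < r" for b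
  proof -
    have "A *v (X b - X a) = E *v (b - a)" using eq[OF db] eq[of a] rpos
      by (simp add: matrix_vector_mult_diff_distrib)
    then have "matrix_inv A *v (A *v (X b - X a)) = matrix_inv A *v (E *v (b - a))" by simp
    then have "X b - X a = J *v (b - a)"
      by (simp add: matrix_vector_mul_assoc J_def matrix_inv_left'[OF inv])
    then show ?thesis by (metis add.commute diff_add_cancel)
  qed
  let ?S = "{b. \<forall>i. 0 < b $ i}"
  have d0: "((\<lambda>b. X a + J *v (b - a)) has_derivative (\<lambda>h. J *v h)) (at a within ?S)"
  proof -
    have "((\<lambda>x. x - a) has_derivative (\<lambda>h. h)) (at a within ?S)"
      using has_derivative_diff[OF has_derivative_ident has_derivative_const] by simp
    then have dd: "((\<lambda>x. J *v (x - a)) has_derivative (\<lambda>h. J *v h)) (at a within ?S)"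
      by (rule bounded_linear.has_derivative[OF matrix_vector_mul_bounded_linear])
    then show ?thesis using has_derivative_add[OF has_derivative_const dd] by simp
  qed
  have dX: "(X has_derivative (\<lambda>h. J *v h)) (at a within ?S)"
    by (rule has_derivative_transform_within[OF d0 rpos]) (use a_pos near in auto)
  show ?thesis using inv dX unfolding Let_def A_def J_def E_def \<xi>_def va_def X_def by simp
qed


end
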